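(* Let $f_t(z)=z^2+t\in\mathbb{Q}(t)[z]$, and let $P_t\in\mathbb{Z}[t]$ be a monic polynomial. Then there exists a power series $F(z)\in\mathbb{Q}[[z]]$, convergent in a real neighbourhood of $0$ and satisfying $F(0)=0$, such that for all $t\in\mathbb{Q}$ with $|t|$ sufficiently large, \[\hat h_{f_t}(P_t)=\hat h_f(P)h(t)+F\!\left(\tfrac1t\right).\]
   Context: $h$ is the usual absolute logarithmic Weil height on $\mathbb{P}^1(\mathbb{Q})$. For $t\in\mathbb{Q}$, $\hat h_{f_t}(x)=\lim_{N\to\infty}2^{-N}h(f_t^N(x))$ is the canonical height of the specialized polynomial. Viewing $f\in K[z]$ and $P\in K$ with $K=\mathbb{Q}(t)$ the function field of $\mathbb{P}^1$, $\hat h_f(P)=\sum_{\beta\in\mathbb{P}^1(\overline{\mathbb{Q}})}\lim_{N\to\infty}2^{-N}\max\{0,-\operatorname{ord}_\beta(f^N(P))\}$. *)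

theory Defs
  imports "HOL-Analysis.Analysis" "HOL-Computational_Algebra.Computational_Algebra"
begin

definition weil_height :: "rat \<Rightarrow> real" where
  "weil_height q = (case quotient_of q of (a, b) \<Rightarrow> ln (real_of_int (max \<bar>a\<bar> \<bar>b\<bar>)))"

definition f_spec :: "rat \<Rightarrow> rat \<Rightarrow> rat" where
  "f_spec t x = x ^ 2 + t"

definition canon_height_spec :: "rat \<Rightarrow> rat \<Rightarrow> real" where
  "canon_height_spec t x = lim (\<lambda>N. weil_height ((f_spec t ^^ N) x) / 2 ^ N)"

text \<open>The map f(z) = z^2 + t over K = Q(t), acting on polynomial elements of K.\<close>
definition f_ff :: "rat poly \<Rightarrow> rat poly" where
  "f_ff Q = Q ^ 2 + [:0, 1:]"

text \<open>Local pole contribution max{0, -ord_beta(Q)} summed over all beta in P^1(Qbar),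
  for Q a polynomial in t: finite places contribute 0 (a polynomial has no finite poles),
  and at infinity -ord_infty(Q) = deg Q (and 0 for Q = 0).\<close>
definition pole_sum_poly :: "rat poly \<Rightarrow> nat" where
  "pole_sum_poly Q = degree Q"

definition canon_height_ff :: "rat poly \<Rightarrow> real" where
  "canon_height_ff P = lim (\<lambda>N. real (pole_sum_poly ((f_ff ^^ N) P)) / 2 ^ N)"

definition fps_eval_real :: "rat fps \<Rightarrow> real \<Rightarrow> real" where
  "fps_eval_real F x = (\<Sum>n. real_of_rat (fps_nth F n) * x ^ n)"

end

theory Submission
  imports Defs "HOL-Complex_Analysis.Complex_Analysis"
begin

lemma quotient_of_coprime_div:
  assumes "D > 0" "coprime A D"
  shows "quotient_of (rat_of_int A / rat_of_int D) = (A, D)"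
  using assms by (simp add: Fract_of_int_quotient[symmetric] quotient_of_Fract)

lemma weil_height_eq:
  assumes "D > 0" "coprime A D"
  shows "weil_height (rat_of_int A / rat_of_int D) = ln (real_of_int D) + ln (max \<bar>real_of_rat (rat_of_int A / rat_of_int D)\<bar> 1)"
proof -
  have D: "real_of_int D > 0" using assms by simp
  have e1: "real_of_rat (rat_of_int A / rat_of_int D) = real_of_int A / real_of_int D"
    by (simp add: of_rat_divide)
  have "max \<bar>real_of_int A\<bar> (real_of_int D) = real_of_int D * max (\<bar>real_of_int A\<bar> / real_of_int D) 1"
  proof -
    have "real_of_int D * max (\<bar>real_of_int A\<bar> / real_of_int D) 1 = max (real_of_int D * (\<bar>real_of_int A\<bar> / real_of_int D)) (real_of_int D * 1)"
      using D by (simp add: max_mult_distrib_left)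
    also have "\<dots> = max \<bar>real_of_int A\<bar> (real_of_int D)" using D by simp
    finally show ?thesis by simp
  qed
  moreover have "\<bar>real_of_int A / real_of_int D\<bar> = \<bar>real_of_int A\<bar> / real_of_int D" using D by simp
  ultimately have "ln (max \<bar>real_of_int A\<bar> (real_of_int D)) = ln (real_of_int D) + ln (max \<bar>real_of_int A / real_of_int D\<bar> 1)"
    using D by (simp add: ln_mult)
  moreover have "real_of_int (max \<bar>A\<bar> D) = max \<bar>real_of_int A\<bar> (real_of_int D)"
    by (simp add: max_def) linarith
  ultimately show ?thesis using assms e1
    by (simp add: weil_height_def quotient_of_coprime_div)
qed
lemma poly_hom_num:
  fixes p :: "int poly" and a b :: int
  assumes "b \<noteq> 0"
  shows "\<exists>B::int. poly (map_poly rat_of_int p) (rat_of_int a / rat_of_int b) * rat_of_int b ^ degree p = rat_of_int B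
          \<and> b dvd (B - lead_coeff p * a ^ degree p)"
proof (induction p)
  case 0
  then show ?case by auto
next
  case (pCons c q)
  show ?case
  proof (cases "q = 0")
    case True
    then show ?thesis by (intro exI[of _ c]) (simp add: map_poly_pCons)
  next
    case False
    then obtain B where B: "poly (map_poly rat_of_int q) (rat_of_int a / rat_of_int b) * rat_of_int b ^ degree q = rat_of_int B"
       "b dvd (B - lead_coeff q * a ^ degree q)" using pCons.IH by blast
    have dg: "degree (pCons c q) = Suc (degree q)" using False by simp
    have "poly (map_poly rat_of_int (pCons c q)) (rat_of_int a / rat_of_int b) * rat_of_int b ^ degree (pCons c q)
        = rat_of_int (c * b ^ Suc (degree q) + a * B)"
    proof -
      have b0: "rat_of_int b \<noteq> 0" using assms by simp
      have "poly (map_poly rat_of_int (pCons c q)) (rat_of_int a / rat_of_int b) * rat_of_int b ^ degree (pCons c q)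
        = rat_of_int c * rat_of_int b ^ Suc (degree q) + rat_of_int a * (poly (map_poly rat_of_int q) (rat_of_int a / rat_of_int b) * rat_of_int b ^ degree q)"
        using b0 False by (simp add: dg map_poly_pCons algebra_simps)
      also have "\<dots> = rat_of_int (c * b ^ Suc (degree q) + a * B)"
        by (simp only: B(1)) simp
      finally show ?thesis .
    qed
    moreover have "b dvd (c * b ^ Suc (degree q) + a * B - lead_coeff (pCons c q) * a ^ degree (pCons c q))"
    proof -
      have "c * b ^ Suc (degree q) + a * B - lead_coeff (pCons c q) * a ^ degree (pCons c q)
         = b * (c * b ^ degree q) + a * (B - lead_coeff q * a ^ degree q)"
        using False by (simp add: dg algebra_simps)
      moreover have "b dvd b * (c * b ^ degree q) + a * (B - lead_coeff q * a ^ degree q)"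
        by (rule dvd_add[OF dvd_triv_left dvd_mult[OF B(2)]])
      ultimately show ?thesis by argo
    qed
    ultimately show ?thesis by blast
  qed
qed


lemma coprime_cong_int:
  fixes x z b :: int
  assumes "coprime x b" "b dvd (z - x)"
  shows "coprime z b"
proof (rule coprimeI)
  fix d assume d: "d dvd z" "d dvd b"
  have "d dvd z - x" using d(2) assms(2) by (rule dvd_trans)
  then have "d dvd z - (z - x)" using d(1) by (rule dvd_diff[rotated])
  then have "d dvd x" by simp
  then show "is_unit d" using assms(1) d(2) coprime_common_divisor by blast
qed

definition ee :: "nat \<Rightarrow> nat \<Rightarrow> nat" where "ee k N = k * 2 ^ Suc N - 1"

lemma ee_ge: "k \<ge> 1 \<Longrightarrow> ee k N \<ge> Suc N"
proof -
  assume k: "k \<ge> 1"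
  have "Suc N < 2 ^ Suc N" by (rule less_exp)
  also have "2 ^ Suc N \<le> k * 2 ^ Suc N" using k by simp
  finally show ?thesis unfolding ee_def by linarith
qed

lemma ee_pos: "k \<ge> 1 \<Longrightarrow> k * 2 ^ Suc N \<ge> (1::nat)"
  by (metis less_one mult_eq_0_iff not_le power_not_zero zero_neq_numeral)

lemma ee_ge2: "k \<ge> 1 \<Longrightarrow> ee k N + 1 \<ge> 2 ^ Suc N"
  using ee_pos[of k N] unfolding ee_def by simp

lemma ee_eq: "k \<ge> 1 \<Longrightarrow> ee k N + 1 = 2 * (k * 2 ^ N)"
  using ee_pos[of k N] unfolding ee_def by simp

fun Wp :: "nat \<Rightarrow> rat poly \<Rightarrow> nat \<Rightarrow> rat poly" where
  "Wp k W0 0 = W0"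
| "Wp k W0 (Suc N) = (Wp k W0 N) ^ 2 + monom 1 (ee k N)"

lemma orbit_poly:
  assumes "t \<noteq> 0" "k \<ge> 1" "z0 = t ^ k * poly W0 (1 / t)"
  shows "(f_spec t ^^ N) z0 = t ^ (k * 2 ^ N) * poly (Wp k W0 N) (1 / t)"
proof (induction N)
  case 0
  then show ?case using assms by simp
next
  case (Suc N)
  have e: "ee k N + 1 = 2 * (k * 2 ^ N)" using ee_eq assms(2) by blast
  have "t ^ (k * 2 ^ Suc N) * (1 / t) ^ ee k N = t"
  proof -
    have "t ^ (k * 2 ^ Suc N) = t ^ (ee k N + 1)" using e by (simp add: mult_ac)
    then show ?thesis using assms(1) by (simp add: power_add power_one_over field_simps)
  qed
  then show ?case using Suc
    by (simp add: f_spec_def poly_monom power_mult_distrib algebra_simps power2_eq_square power_add mult_2)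
qed

lemma orbit_num:
  assumes "b > 0" "coprime a b" "k \<ge> 1" "z0 = rat_of_int A0 / rat_of_int b ^ k" "coprime A0 b"
  shows "\<exists>A. (f_spec (rat_of_int a / rat_of_int b) ^^ N) z0 = rat_of_int A / rat_of_int b ^ (k * 2 ^ N) \<and> coprime A b"
proof (induction N)
  case 0
  then show ?case using assms by auto
next
  case (Suc N)
  then obtain A where A: "(f_spec (rat_of_int a / rat_of_int b) ^^ N) z0 = rat_of_int A / rat_of_int b ^ (k * 2 ^ N)" "coprime A b"
    by blast
  define m where "m = k * 2 ^ N"
  have m1: "m \<ge> 1" using assms(3) by (simp add: m_def)
  have bm: "rat_of_int b \<noteq> 0" using assms(1) by simp
  have "(f_spec (rat_of_int a / rat_of_int b) ^^ Suc N) z0 = (rat_of_int A / rat_of_int b ^ m) ^ 2 + rat_of_int a / rat_of_int b"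
    using A(1) by (simp add: f_spec_def m_def)
  also have "\<dots> = rat_of_int (A ^ 2 + a * b ^ (2 * m - 1)) / rat_of_int b ^ (k * 2 ^ Suc N)"
  proof -
    have "rat_of_int b ^ (2 * m) = rat_of_int b * rat_of_int b ^ (2 * m - 1)"
      using m1 by (metis One_nat_def Suc_pred less_eq_Suc_le mult_pos_pos pos2 power_Suc zero_less_one)
    then show ?thesis using bm by (simp add: m_def field_simps power2_eq_square power_mult_distrib flip: power_add mult_2)
  qed
  finally have "(f_spec (rat_of_int a / rat_of_int b) ^^ Suc N) z0 = rat_of_int (A ^ 2 + a * b ^ (2 * m - 1)) / rat_of_int b ^ (k * 2 ^ Suc N)" .
  moreover have "coprime (A ^ 2 + a * b ^ (2 * m - 1)) b"
  proof (rule coprime_cong_int)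
    show "coprime (A ^ 2) b" using A(2) by simp
    have "b dvd b ^ (2 * m - 1)" using m1 by (simp add: dvd_power)
    then show "b dvd A ^ 2 + a * b ^ (2 * m - 1) - A ^ 2" by simp
  qed
  ultimately show ?case by blast
qed


lemma of_rat_poly_eval:
  fixes p :: "rat poly"
  shows "(of_rat (poly p x) :: 'a::field_char_0) = poly (map_poly of_rat p) (of_rat x)"
  by (induction p) (simp_all add: map_poly_pCons of_rat_add of_rat_mult)

lemma ln3: "ln (3::real) > 1"
proof -
  have "exp 1 < (3::real)" using e_less_272 by simp
  then have "ln (exp 1) < ln (3::real)" by (subst ln_less_cancel_iff) auto
  then show ?thesis by simp
qed

definition RF :: "complex fps \<Rightarrow> bool" where "RF F \<longleftrightarrow> (\<forall>n. fps_nth F n \<in> \<rat>)"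

lemma RF_add: "RF F \<Longrightarrow> RF G \<Longrightarrow> RF (F + G)"
  unfolding RF_def by auto

lemma RF_diff: "RF F \<Longrightarrow> RF G \<Longrightarrow> RF (F - G)"
  unfolding RF_def by auto

lemma RF_mult: "RF F \<Longrightarrow> RF G \<Longrightarrow> RF (F * G)"
  unfolding RF_def by (auto simp: fps_mult_nth intro!: Rats_sum Rats_mult)

lemma RF_1: "RF 1"
  unfolding RF_def by (simp add: fps_one_nth)

lemma RF_power: "RF F \<Longrightarrow> RF (F ^ n)"
  by (induction n) (auto intro: RF_mult RF_1)

lemma RF_const: "c \<in> \<rat> \<Longrightarrow> RF (fps_const c)"
  unfolding RF_def by (simp add: fps_const_def)

lemma RF_X_power: "RF (fps_X ^ n)"
  unfolding RF_def by simp

lemma RF_poly: "RF (fps_of_poly (map_poly of_rat p))"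
  unfolding RF_def by (simp add: coeff_map_poly)

lemma RF_inverse:
  assumes "RF F" "fps_nth F 0 \<noteq> 0"
  shows "RF (inverse F)"
  unfolding RF_def
proof
  fix n
  show "fps_nth (inverse F) n \<in> \<rat>"
  proof (induction n rule: less_induct)
    case (less n)
    show ?case
    proof (cases n)
      case 0
      then show ?thesis using assms by (auto simp: RF_def)
    next
      case (Suc m)
      have "(F * inverse F) $ n = 0" using inverse_mult_eq_1'[OF assms(2)] Suc by simp
      then have "(\<Sum>i=0..n. F$i * (inverse F)$(n - i)) = 0" by (simp add: fps_mult_nth)
      moreover have "(\<Sum>i=0..n. F$i * (inverse F)$(n - i)) = F$0 * (inverse F)$n + (\<Sum>i=1..n. F$i * (inverse F)$(n - i))"
        using Suc by (simp add: sum.atLeast_Suc_atMost)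
      ultimately have eq: "(inverse F)$n = - (\<Sum>i=1..n. F$i * (inverse F)$(n - i)) / F$0"
        using assms(2) by (simp add: field_simps add_eq_0_iff)
      have "(\<Sum>i=1..n. F$i * (inverse F)$(n - i)) \<in> \<rat>"
      proof (rule Rats_sum)
        fix i assume i: "i \<in> {1..n}"
        then have "n - i < n" by auto
        then show "F$i * (inverse F)$(n - i) \<in> \<rat>" using less.IH assms(1) by (auto simp: RF_def)
      qed
      then show ?thesis using eq assms(1) unfolding RF_def by (auto intro!: Rats_divide)
    qed
  qed
qed

lemma RF_compose: "RF F \<Longrightarrow> RF G \<Longrightarrow> RF (fps_compose F G)"
  unfolding RF_def
proof
  fix n assume F: "\<forall>n. F $ n \<in> \<rat>" and G: "\<forall>n. G $ n \<in> \<rat>"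
  have "RF (G ^ i)" for i using G RF_power by (auto simp: RF_def)
  then show "fps_compose F G $ n \<in> \<rat>" using F
    by (auto simp: fps_compose_nth RF_def intro!: Rats_sum Rats_mult)
qed

definition Lfps :: "complex fps" where "Lfps = Abs_fps (\<lambda>n. (-1) ^ Suc n / of_nat n)"

lemma RF_Lfps: "RF Lfps"
  unfolding RF_def Lfps_def by (auto intro!: Rats_divide Rats_power)

lemma Lfps_0: "Lfps $ 0 = 0" by (simp add: Lfps_def)

lemma Ln_has_fps: "(\<lambda>z::complex. Ln (1 + z)) has_fps_expansion Lfps"
proof (rule has_fps_expansionI)
  have "eventually (\<lambda>z::complex. z \<in> ball 0 1) (nhds 0)" by (intro eventually_nhds_in_open) auto
  then show "eventually (\<lambda>u. (\<lambda>n. fps_nth Lfps n * u ^ n) sums Ln (1 + u)) (nhds 0)"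
    by eventually_elim (use Ln_series in \<open>auto simp: Lfps_def\<close>)
qed

lemma of_real_of_rat_c: "complex_of_real (real_of_rat q) = of_rat q"
  by (cases q) (simp add: of_rat_rat)


fun wf :: "nat \<Rightarrow> rat poly \<Rightarrow> nat \<Rightarrow> 'a::real_normed_field \<Rightarrow> 'a" where
  "wf k W0 0 u = poly (map_poly of_rat W0) u"
| "wf k W0 (Suc N) u = (wf k W0 N u) ^ 2 + u ^ ee k N"

definition qc :: "nat \<Rightarrow> rat poly \<Rightarrow> nat \<Rightarrow> complex \<Rightarrow> complex" where
  "qc k W0 N u = u ^ ee k N * inverse ((wf k W0 N u) ^ 2)"

definition gt :: "nat \<Rightarrow> rat poly \<Rightarrow> nat \<Rightarrow> complex \<Rightarrow> complex" where
  "gt k W0 N u = Ln (1 + qc k W0 N u) / 2 ^ Suc N"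

definition phic :: "nat \<Rightarrow> rat poly \<Rightarrow> nat \<Rightarrow> complex \<Rightarrow> complex" where
  "phic k W0 N u = Ln (wf k W0 0 u) + (\<Sum>i<N. gt k W0 i u)"

definition phi :: "nat \<Rightarrow> rat poly \<Rightarrow> complex \<Rightarrow> complex" where
  "phi k W0 u = Ln (wf k W0 0 u) + (\<Sum>i. gt k W0 i u)"

lemma geo_bound:
  fixes x :: real
  assumes "0 \<le> x" "x \<le> 1/8"
  shows "(\<Sum>j<N. exp 1 * x ^ Suc j) \<le> 2/5"
proof -
  have x1: "x < 1" using assms by simp
  have "(\<Sum>j<N. x ^ Suc j) = x * (\<Sum>j<N. x ^ j)" by (simp add: sum_distrib_left)
  also have "(\<Sum>j<N. x ^ j) = (1 - x ^ N) / (1 - x)" using x1 by (simp add: sum_gp_strict)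
  also have "\<dots> \<le> 1 / (1 - x)" using x1 assms(1) by (simp add: divide_right_mono)
  finally have "(\<Sum>j<N. x ^ Suc j) \<le> x * (1 / (1 - x))" using assms(1) by (simp add: mult_left_mono)
  also have "\<dots> \<le> (1/8) * (8/7)"
  proof (rule mult_mono)
    show "1 / (1 - x) \<le> 8/7" using assms by (simp add: field_simps)
  qed (use assms in auto)
  finally have s: "(\<Sum>j<N. x ^ Suc j) \<le> 1/7" by simp
  have "(\<Sum>j<N. exp 1 * x ^ Suc j) = exp 1 * (\<Sum>j<N. x ^ Suc j)" by (simp add: sum_distrib_left)
  also have "\<dots> \<le> (272/100) * (1/7)"
    using e_less_272 s by (intro mult_mono) (auto intro!: sum_nonneg simp: assms(1))
  finally show ?thesis by simp
qed

lemma norm_exp_ge: "norm (exp (z::complex)) \<ge> exp (- norm z)"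
proof -
  have "- norm z \<le> Re z" using abs_Re_le_cmod[of z] by linarith
  then show ?thesis by (simp add: norm_exp_eq_Re)
qed

lemma exp_nat_pow: "exp (real n) = exp 1 ^ n"
  by (metis exp_of_nat_mult mult.right_neutral)

lemma q_bound_from:
  fixes u w phN :: complex
  assumes k: "k \<ge> 1" and ew: "exp (2 ^ N * phN) = w" and pb: "norm phN \<le> 1"
  shows "norm (u ^ ee k N * inverse (w ^ 2)) \<le> exp 1 * (exp 1 * norm u) ^ ee k N"
proof -
  have "norm w \<ge> exp (- norm (2 ^ N * phN))" using norm_exp_ge ew by blast
  moreover have "norm (2 ^ N * phN) \<le> 2 ^ N" using pb by (simp add: norm_mult norm_power mult_left_le)
  ultimately have wb: "norm w \<ge> exp (- (2 ^ N))" by (meson exp_le_cancel_iff neg_le_iff_le order_trans)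
  have w0: "w \<noteq> 0" using ew by auto
  have "norm (inverse (w ^ 2)) = inverse (norm w ^ 2)" by (simp add: norm_inverse norm_power)
  also have "\<dots> \<le> inverse (exp (- (2 ^ N)) ^ 2)"
    using wb by (intro le_imp_inverse_le power_mono) auto
  also have "\<dots> = exp (2 ^ Suc N)" by (simp add: exp_minus power2_eq_square exp_add[symmetric])
  also have "\<dots> \<le> exp (real (ee k N + 1))"
  proof -
    have "real (2 ^ Suc N) \<le> real (ee k N + 1)" using ee_ge2[OF k, of N] by (simp only: of_nat_le_iff)
    then show ?thesis by simp
  qed
  also have "\<dots> = exp 1 * exp 1 ^ ee k N" by (simp add: exp_add exp_nat_pow)
  finally have "norm (inverse (w ^ 2)) \<le> exp 1 * exp 1 ^ ee k N" .
  then have "norm (u ^ ee k N * inverse (w ^ 2)) \<le> norm u ^ ee k N * (exp 1 * exp 1 ^ ee k N)"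
    by (simp add: norm_mult norm_power mult_left_mono)
  also have "\<dots> = exp 1 * (exp 1 * norm u) ^ ee k N" by (simp add: power_mult_distrib)
  finally show ?thesis .
qed


locale orbd =
  fixes k :: nat and W0 :: "rat poly" and \<delta> :: real
  assumes k1: "k \<ge> 1" and W01: "coeff W0 0 = 1" and dpos: "\<delta> > 0"
    and dsmall: "\<delta> \<le> 1 / (8 * exp 1)"
    and dw: "\<And>u::complex. norm u < \<delta> \<Longrightarrow> norm (wf k W0 0 u - 1) < 1/4"
begin

lemma xb: assumes "norm (u::complex) < \<delta>" shows "exp 1 * norm u \<le> 1/8"
proof -
  have "exp 1 * norm u \<le> exp 1 * \<delta>" using assms by simp
  also have "\<dots> \<le> exp 1 * (1 / (8 * exp 1))" using dsmall by (intro mult_left_mono) auto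
  finally show ?thesis by simp
qed

lemma main_bound:
  assumes u: "norm u < \<delta>"
  shows "wf k W0 N u \<noteq> 0 \<and> exp (2 ^ N * phic k W0 N u) = wf k W0 N u \<and>
         norm (phic k W0 N u) \<le> 1/2 + (\<Sum>j<N. exp 1 * (exp 1 * norm u) ^ Suc j)"
proof (induction N)
  case 0
  have d: "norm (wf k W0 0 u - 1) < 1/4" using dw u by blast
  then have w0: "wf k W0 0 u \<noteq> 0" by auto
  have "norm (Ln (1 + (wf k W0 0 u - 1))) \<le> 2 * norm (wf k W0 0 u - 1)"
    using d by (intro norm_Ln_le) auto
  then have "norm (Ln (wf k W0 0 u)) \<le> 1/2" using d by simp
  then show ?case using w0 by (simp add: phic_def)
next
  case (Suc N)
  define x where "x = exp 1 * norm u"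
  have x0: "0 \<le> x" and x8: "x \<le> 1/8" using xb[OF u] by (auto simp: x_def)
  define w where "w = wf k W0 N u"
  define p where "p = phic k W0 N u"
  define q where "q = qc k W0 N u"
  have w0: "w \<noteq> 0" and ew: "exp (2 ^ N * p) = w" and pb0: "norm p \<le> 1/2 + (\<Sum>j<N. exp 1 * x ^ Suc j)"
    using Suc by (auto simp: w_def p_def x_def)
  have pb: "norm p \<le> 1" using pb0 geo_bound[OF x0 x8, of N] by linarith
  have qb: "norm q \<le> exp 1 * x ^ ee k N"
    using q_bound_from[OF k1 ew pb, of u] by (simp add: q_def qc_def x_def w_def)
  have "x ^ ee k N \<le> x ^ Suc N" using x0 x8 ee_ge[OF k1, of N] by (intro power_decreasing) auto
  then have qb2: "norm q \<le> exp 1 * x ^ Suc N" using qb by (simp add: order_trans)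
  have "x ^ Suc N \<le> x" using x0 x8 by (simp add: mult_left_le power_le_one)
  hence "exp 1 * x ^ Suc N \<le> exp 1 * (1/8)" using x8 by (simp add: order_trans)
  also have "\<dots> < 1/2" using e_less_272 by simp
  finally have q12: "norm q < 1/2" using qb2 by linarith
  have lnq: "norm (Ln (1 + q)) \<le> 2 * norm q" using q12 by (rule norm_Ln_le)
  have g: "gt k W0 N u = Ln (1 + q) / 2 ^ Suc N" by (simp add: gt_def q_def)
  have gb: "norm (gt k W0 N u) \<le> exp 1 * x ^ Suc N"
  proof -
    have "norm (gt k W0 N u) = norm (Ln (1 + q)) / 2 ^ Suc N" by (simp add: g norm_divide norm_power)
    also have "\<dots> \<le> 2 * norm q / 2 ^ Suc N" using lnq by (intro divide_right_mono) auto
    also have "\<dots> \<le> norm q"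
    proof -
      have "(1::real) \<le> 2 ^ N" by simp
      then have "norm q * 1 \<le> norm q * 2 ^ N" by (intro mult_left_mono) auto
      then show ?thesis by (simp add: field_simps)
    qed
    finally show ?thesis using qb2 by linarith
  qed
  have ps: "phic k W0 (Suc N) u = p + gt k W0 N u" by (simp add: phic_def p_def)
  have nb: "norm (phic k W0 (Suc N) u) \<le> 1/2 + (\<Sum>j<Suc N. exp 1 * (exp 1 * norm u) ^ Suc j)"
  proof -
    have "norm (phic k W0 (Suc N) u) \<le> norm p + norm (gt k W0 N u)" unfolding ps by (rule norm_triangle_ineq)
    then show ?thesis using pb0 gb by (simp add: x_def)
  qed
  have q1: "1 + q \<noteq> 0"
  proof
    assume "1 + q = 0" then have "q = -1" by (simp add: add_eq_0_iff)
    then show False using q12 by simp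
  qed
  have "2 ^ Suc N * phic k W0 (Suc N) u = 2 * (2 ^ N * p) + Ln (1 + q)"
    unfolding ps g by (simp add: field_simps)
  then have "exp (2 ^ Suc N * phic k W0 (Suc N) u) = exp (2 ^ N * p) ^ 2 * exp (Ln (1 + q))"
    by (simp only: exp_add exp_double)
  also have "\<dots> = w ^ 2 * (1 + q)" using ew q1 by simp
  also have "\<dots> = wf k W0 (Suc N) u" using w0 by (simp add: q_def qc_def w_def field_simps)
  finally have e2: "exp (2 ^ Suc N * phic k W0 (Suc N) u) = wf k W0 (Suc N) u" .
  then have "wf k W0 (Suc N) u \<noteq> 0" by (metis exp_not_eq_zero)
  then show ?case using e2 nb by blast
qed

end

fun WF :: "nat \<Rightarrow> rat poly \<Rightarrow> nat \<Rightarrow> complex fps" where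
  "WF k W0 0 = fps_of_poly (map_poly of_rat W0)"
| "WF k W0 (Suc N) = (WF k W0 N) ^ 2 + fps_X ^ ee k N"

definition QF :: "nat \<Rightarrow> rat poly \<Rightarrow> nat \<Rightarrow> complex fps" where
  "QF k W0 N = fps_X ^ ee k N * inverse ((WF k W0 N) ^ 2)"

definition GF :: "nat \<Rightarrow> rat poly \<Rightarrow> nat \<Rightarrow> complex fps" where
  "GF k W0 N = fps_compose Lfps (WF k W0 0 - 1) + (\<Sum>i<N. fps_compose Lfps (QF k W0 i) * fps_const (1 / 2 ^ Suc i))"

lemma wf_holo: "(\<lambda>u. wf k W0 N u) holomorphic_on A"
  by (induction N) (auto intro!: holomorphic_intros)

lemma WF_exp: "(\<lambda>u. wf k W0 N u) has_fps_expansion WF k W0 N"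
proof (induction N)
  case 0
  have "(eval_fps (fps_of_poly (map_poly (of_rat::rat\<Rightarrow>complex) W0))) has_fps_expansion (fps_of_poly (map_poly of_rat W0))"
    by (intro eval_fps_has_fps_expansion) simp
  then show ?case by (simp add: eval_fps_of_poly[abs_def])
next
  case (Suc N)
  then show ?case by (auto intro!: fps_expansion_intros)
qed

lemma RF_WF: "RF (WF k W0 N)"
  by (induction N) (auto intro!: RF_add RF_power RF_X_power RF_poly)

context orbd
begin

lemma wf_at_0: "wf k W0 N (0::'a::real_normed_field) = 1"
proof (induction N)
  case 0
  then show ?case using W01 by (simp add: poly_0_coeff_0 coeff_map_poly)
next
  case (Suc N)
  have "ee k N \<noteq> 0" using ee_ge[OF k1, of N] by simp
  then show ?case using Suc by simp
qed

lemma WF_0: "WF k W0 N $ 0 = 1"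
  using has_fps_expansion_imp_0_eq_fps_nth_0[OF WF_exp[of k W0 N]] wf_at_0[of N] by metis

lemma QF_exp: "qc k W0 N has_fps_expansion QF k W0 N"
proof -
  have "(\<lambda>u. u ^ ee k N * inverse ((wf k W0 N u) ^ 2)) has_fps_expansion fps_X ^ ee k N * inverse ((WF k W0 N) ^ 2)"
    by (intro fps_expansion_intros WF_exp) (simp add: WF_0)
  then show ?thesis by (simp add: qc_def[abs_def] QF_def)
qed

lemma QF_0: "QF k W0 N $ 0 = 0"
proof -
  have "ee k N \<noteq> 0" using ee_ge[OF k1, of N] by simp
  then show ?thesis by (simp add: QF_def fps_mult_nth)
qed

lemma RF_QF: "RF (QF k W0 N)"
  unfolding QF_def by (intro RF_mult RF_X_power RF_inverse RF_power RF_WF) (simp add: WF_0)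

lemma gt_exp: "gt k W0 i has_fps_expansion fps_compose Lfps (QF k W0 i) * fps_const (1 / 2 ^ Suc i)"
proof -
  have "(\<lambda>u. ((\<lambda>z. Ln (1 + z)) \<circ> qc k W0 i) u * (1 / 2 ^ Suc i)) has_fps_expansion fps_compose Lfps (QF k W0 i) * fps_const (1 / 2 ^ Suc i)"
    by (intro has_fps_expansion_cmult_right has_fps_expansion_compose Ln_has_fps QF_exp QF_0)
  moreover have "(\<lambda>u. ((\<lambda>z. Ln (1 + z)) \<circ> qc k W0 i) u * (1 / 2 ^ Suc i)) = gt k W0 i"
    by (auto simp: gt_def fun_eq_iff)
  ultimately show ?thesis by simp
qed

lemma phic_exp: "phic k W0 N has_fps_expansion GF k W0 N"
proof -
  have b: "(\<lambda>u. ((\<lambda>z. Ln (1 + z)) \<circ> (\<lambda>u. wf k W0 0 u - 1)) u) has_fps_expansion fps_compose Lfps (WF k W0 0 - 1)"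
    by (intro has_fps_expansion_compose Ln_has_fps has_fps_expansion_diff WF_exp has_fps_expansion_1) (simp add: coeff_map_poly W01)
  have "(\<lambda>u. ((\<lambda>z. Ln (1 + z)) \<circ> (\<lambda>u. wf k W0 0 u - 1)) u + (\<Sum>i<N. gt k W0 i u)) has_fps_expansion GF k W0 N"
    unfolding GF_def by (intro has_fps_expansion_add b has_fps_expansion_sum gt_exp)
  then show ?thesis by (simp add: phic_def[abs_def])
qed

lemma RF_GF: "RF (GF k W0 N)"
  unfolding GF_def
proof (intro RF_add RF_compose RF_Lfps RF_diff RF_WF RF_1)
  show "RF (\<Sum>i<N. fps_compose Lfps (QF k W0 i) * fps_const (1 / 2 ^ Suc i))"
  proof (induction N)
    case 0 then show ?case by (simp add: RF_def)
  next
    case (Suc N) then show ?case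
      by (simp, intro RF_add RF_mult RF_compose RF_Lfps RF_QF RF_const) auto
  qed
qed

end

lemma not_nonpos_if_near1: "norm (z - 1) < 1 \<Longrightarrow> (z::complex) \<notin> \<real>\<^sub>\<le>\<^sub>0"
proof
  assume a: "norm (z - 1) < 1" and b: "z \<in> \<real>\<^sub>\<le>\<^sub>0"
  have "Re z \<le> 0" using b by (simp add: complex_nonpos_Reals_iff)
  moreover have "\<bar>Re (z - 1)\<bar> < 1" using a abs_Re_le_cmod[of "z - 1"] by linarith
  ultimately show False by simp
qed

context orbd
begin

lemma phic_le1:
  fixes u :: complex
  assumes u: "norm u < \<delta>"
  shows "norm (phic k W0 N u) \<le> 1"
proof -
  have x0: "0 \<le> exp 1 * norm u" and x8: "exp 1 * norm u \<le> 1/8" using xb[OF u] by auto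
  show ?thesis using main_bound[OF u, of N] geo_bound[OF x0 x8, of N] by linarith
qed

lemma q_bound:
  fixes u :: complex
  assumes u: "norm u < \<delta>"
  shows "norm (qc k W0 N u) \<le> exp 1 * (exp 1 * norm u) ^ ee k N"
proof -
  have "exp (2 ^ N * phic k W0 N u) = wf k W0 N u" using main_bound[OF u, of N] by blast
  from q_bound_from[OF k1 this phic_le1[OF u], of u] show ?thesis by (simp add: qc_def)
qed

lemma pow_ee_le:
  fixes u :: complex
  assumes u: "norm u < \<delta>"
  shows "(exp 1 * norm u) ^ ee k N \<le> (exp 1 * norm u) ^ Suc N"
  using xb[OF u] ee_ge[OF k1, of N] by (intro power_decreasing) auto

lemma q_half:
  fixes u :: complex
  assumes u: "norm u < \<delta>"
  shows "norm (qc k W0 N u) < 1/2"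
proof -
  define x where "x = exp 1 * norm u"
  have x0: "0 \<le> x" and x8: "x \<le> 1/8" using xb[OF u] by (auto simp: x_def)
  have "x ^ Suc N \<le> x" using x0 x8 by (simp add: mult_left_le power_le_one)
  hence "exp 1 * x ^ Suc N \<le> exp 1 * (1/8)" using x8 by (simp add: order_trans)
  also have "\<dots> < 1/2" using e_less_272 by simp
  finally show ?thesis using q_bound[OF u, of N] pow_ee_le[OF u, of N]
    by (smt (verit, ccfv_SIG) exp_gt_zero mult_left_mono x_def)
qed

lemma gt_bound:
  fixes u :: complex
  assumes u: "norm u < \<delta>"
  shows "norm (gt k W0 N u) \<le> exp 1 * (exp 1 * norm u) ^ ee k N"
proof -
  define q where "q = qc k W0 N u"
  have lnq: "norm (Ln (1 + q)) \<le> 2 * norm q" using q_half[OF u] by (intro norm_Ln_le) (simp add: q_def)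
  have "norm (gt k W0 N u) = norm (Ln (1 + q)) / 2 ^ Suc N" by (simp add: gt_def q_def norm_divide norm_power)
  also have "\<dots> \<le> 2 * norm q / 2 ^ Suc N" using lnq by (intro divide_right_mono) auto
  also have "\<dots> \<le> norm q"
  proof -
    have "(1::real) \<le> 2 ^ N" by simp
    then have "norm q * 1 \<le> norm q * 2 ^ N" by (intro mult_left_mono) auto
    then show ?thesis by (simp add: field_simps)
  qed
  finally show ?thesis using q_bound[OF u, of N] by (simp add: q_def)
qed

lemma gt_bound2:
  fixes u :: complex
  assumes u: "norm u < \<delta>"
  shows "norm (gt k W0 N u) \<le> exp 1 * (exp 1 * norm u) ^ Suc N"
  using gt_bound[OF u, of N] pow_ee_le[OF u, of N] by (smt (verit) exp_gt_zero mult_left_mono)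

lemma gt_holo: "gt k W0 N holomorphic_on ball 0 \<delta>"
proof -
  have nz: "wf k W0 N u ^ 2 \<noteq> 0" if "u \<in> ball 0 \<delta>" for u :: complex
    using main_bound[of u N] that by auto
  have np: "1 + u ^ ee k N * inverse (wf k W0 N u ^ 2) \<notin> \<real>\<^sub>\<le>\<^sub>0" if "u \<in> ball 0 \<delta>" for u :: complex
  proof (rule not_nonpos_if_near1)
    show "norm (1 + u ^ ee k N * inverse (wf k W0 N u ^ 2) - 1) < 1"
      using q_half[of u N] that by (simp add: qc_def)
  qed
  have "(\<lambda>u. Ln (1 + u ^ ee k N * inverse (wf k W0 N u ^ 2)) / 2 ^ Suc N) holomorphic_on ball 0 \<delta>"
    by (intro holomorphic_intros holomorphic_on_Ln' np wf_holo nz) auto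
  then show ?thesis by (simp add: gt_def[abs_def] qc_def)
qed

lemma summable_gt:
  fixes u :: complex
  assumes u: "norm u < \<delta>"
  shows "summable (\<lambda>i. gt k W0 i u)"
proof (rule summable_comparison_test')
  define x where "x = exp 1 * norm u"
  have x0: "0 \<le> x" and x8: "x \<le> 1/8" using xb[OF u] by (auto simp: x_def)
  show "summable (\<lambda>i. exp 1 * x ^ Suc i)"
    using x0 x8 by (intro summable_mult summable_geometric[THEN summable_Suc_iff[THEN iffD2]]) auto
  show "norm (gt k W0 i u) \<le> exp 1 * x ^ Suc i" for i using gt_bound2[OF u] by (simp add: x_def)
qed

lemma gt_unif: "uniform_limit (cball 0 (\<delta>/2)) (\<lambda>n u. \<Sum>i<n. gt k W0 i u) (\<lambda>u. \<Sum>i. gt k W0 i u) sequentially"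
proof (rule Weierstrass_m_test)
  define x where "x = exp 1 * (\<delta>/2)"
  have "exp 1 * \<delta> \<le> exp 1 * (1 / (8 * exp 1))" by (intro mult_left_mono dsmall) auto
  then have "exp 1 * \<delta> \<le> 1/8" by simp
  then have x0: "0 \<le> x" and x8: "x < 1" using dpos by (auto simp: x_def)
  show "summable (\<lambda>i. exp 1 * x ^ Suc i)"
    using x0 x8 by (intro summable_mult summable_geometric[THEN summable_Suc_iff[THEN iffD2]]) auto
  fix n u assume u: "u \<in> cball (0::complex) (\<delta>/2)"
  then have u': "norm u < \<delta>" using dpos by auto
  have "(exp 1 * norm u) ^ Suc n \<le> x ^ Suc n" using u by (intro power_mono) (auto simp: x_def)
  then show "norm (gt k W0 n u) \<le> exp 1 * x ^ Suc n"
    using gt_bound2[OF u', of n] by (smt (verit) exp_gt_zero mult_left_mono)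
qed

lemma phi_holo: "phi k W0 holomorphic_on ball 0 (\<delta>/2)"
proof -
  have sub: "cball (0::complex) (\<delta>/2) \<subseteq> ball 0 \<delta>" using dpos by auto
  obtain "(\<lambda>u. \<Sum>i. gt k W0 i u) holomorphic_on ball 0 (\<delta>/2)"
  proof (rule holomorphic_uniform_limit[OF _ gt_unif])
    show "\<forall>\<^sub>F n in sequentially. continuous_on (cball 0 (\<delta> / 2)) (\<lambda>u. \<Sum>i<n. gt k W0 i u) \<and>
          (\<lambda>u. \<Sum>i<n. gt k W0 i u) holomorphic_on ball 0 (\<delta> / 2)"
    proof (intro always_eventually allI conjI)
      fix n
      have h: "(\<lambda>u. \<Sum>i<n. gt k W0 i u) holomorphic_on ball 0 \<delta>"
        by (intro holomorphic_on_sum gt_holo)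
      show "continuous_on (cball 0 (\<delta> / 2)) (\<lambda>u. \<Sum>i<n. gt k W0 i u)"
        using holomorphic_on_imp_continuous_on[OF holomorphic_on_subset[OF h sub]] .
      show "(\<lambda>u. \<Sum>i<n. gt k W0 i u) holomorphic_on ball 0 (\<delta> / 2)"
        by (rule holomorphic_on_subset[OF h]) (use sub in auto)
    qed
  qed auto
  moreover have "(\<lambda>u. Ln (wf k W0 0 u)) holomorphic_on ball 0 (\<delta>/2)"
  proof (intro holomorphic_on_Ln' wf_holo)
    fix u :: complex assume "u \<in> ball 0 (\<delta>/2)"
    then have "norm u < \<delta>" using dpos by auto
    then have "norm (wf k W0 0 u - 1) < 1" using dw[of u] by simp
    then show "wf k W0 0 u \<notin> \<real>\<^sub>\<le>\<^sub>0" by (rule not_nonpos_if_near1)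
  qed
  ultimately have "(\<lambda>u. Ln (wf k W0 0 u) + (\<Sum>i. gt k W0 i u)) holomorphic_on ball 0 (\<delta>/2)"
    by (intro holomorphic_on_add)
  then show ?thesis by (simp add: phi_def[abs_def])
qed

lemma phi_exp: "phi k W0 has_fps_expansion fps_expansion (phi k W0) 0"
  using phi_holo dpos by (intro has_fps_expansion_fps_expansion) auto

end

lemma small_zero:
  fixes c C \<rho> :: real and m :: nat
  assumes "0 < \<rho>" "1 \<le> m" "C \<ge> 0" "\<And>r. 0 < r \<Longrightarrow> r < \<rho> \<Longrightarrow> c \<le> C * r ^ m"
  shows "c \<le> 0"
proof (rule ccontr)
  assume "\<not> c \<le> 0" then have c: "c > 0" by simp
  define r where "r = min (\<rho>/2) (min (1/2) (c / (2 * C + 1)))"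
  have r0: "0 < r" using assms(1) c assms(3) by (simp add: r_def)
  have r1: "r < \<rho>" "r \<le> 1" using assms(1) by (auto simp: r_def)
  have "r ^ m \<le> r ^ 1" using r0 r1(2) assms(2) by (intro power_decreasing) auto
  then have "C * r ^ m \<le> C * r" using assms(3) by (simp add: mult_left_mono)
  also have "\<dots> \<le> C * (c / (2 * C + 1))" using assms(3) by (intro mult_left_mono) (auto simp: r_def)
  also have "\<dots> < c"
  proof -
    have "C * c < c * (2 * C + 1)" using c assms(3) by (simp add: algebra_simps add_pos_nonneg mult_pos_pos) 
    then show ?thesis using assms(3) by (simp add: field_simps)
  qed
  finally show False using assms(4)[OF r0 r1(1)] by simp
qed

lemma ee_Suc: "k \<ge> 1 \<Longrightarrow> ee k (Suc m) = 2 * ee k m + 1"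
  using ee_eq[of k m] ee_eq[of k "Suc m"] by simp

lemma ee_mono_add: "k \<ge> 1 \<Longrightarrow> ee k N + i \<le> ee k (i + N)"
proof (induction i)
  case 0 then show ?case by simp
next
  case (Suc i)
  then show ?case using ee_Suc[OF Suc.prems, of "i + N"] by simp
qed

context orbd
begin

lemma tail_bound:
  fixes x :: complex
  assumes x: "norm x = r" "0 < r" "r < \<delta>/2"
  shows "norm (phi k W0 x - phic k W0 N x) \<le> 2 * exp 1 * (exp 1 * r) ^ ee k N"
proof -
  have xd: "norm x < \<delta>" using x by simp
  define y where "y = exp 1 * r"
  have y0: "0 \<le> y" and y8: "y \<le> 1/8" using xb[OF xd] x(1) by (auto simp: y_def)
  have "phi k W0 x - phic k W0 N x = (\<Sum>n. gt k W0 (n + N) x)"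
    using suminf_split_initial_segment[OF summable_gt[OF xd], of N] by (simp add: phi_def phic_def)
  also have "norm \<dots> \<le> (\<Sum>n. exp 1 * y ^ ee k N * y ^ n)"
  proof (rule norm_suminf_le)
    show "summable (\<lambda>n. exp 1 * y ^ ee k N * y ^ n)"
      using y0 y8 by (intro summable_mult summable_geometric) auto
    fix n
    have "norm (gt k W0 (n + N) x) \<le> exp 1 * y ^ ee k (n + N)" using gt_bound[OF xd] x(1) by (simp add: y_def)
    also have "y ^ ee k (n + N) \<le> y ^ (ee k N + n)"
      using y0 y8 ee_mono_add[OF k1, of N n] by (intro power_decreasing) auto
    finally show "norm (gt k W0 (n + N) x) \<le> exp 1 * y ^ ee k N * y ^ n"
      by (simp add: power_add mult_ac mult_left_mono)
  qed
  also have "\<dots> = exp 1 * y ^ ee k N * (1 / (1 - y))"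
    using y0 y8 by (subst suminf_mult) (auto intro!: summable_geometric simp: suminf_geometric)
  also have "\<dots> \<le> exp 1 * y ^ ee k N * 2"
    using y0 y8 by (intro mult_left_mono) (auto simp: field_simps)
  finally show ?thesis by (simp add: y_def mult_ac)
qed

lemma phic_holo: "phic k W0 N holomorphic_on ball 0 \<delta>"
proof -
  have "(\<lambda>u. Ln (wf k W0 0 u)) holomorphic_on ball 0 \<delta>"
  proof (intro holomorphic_on_Ln' wf_holo)
    fix u :: complex assume "u \<in> ball 0 \<delta>"
    then have "norm (wf k W0 0 u - 1) < 1" using dw[of u] by simp
    then show "wf k W0 0 u \<notin> \<real>\<^sub>\<le>\<^sub>0" by (rule not_nonpos_if_near1)
  qed
  moreover have "(\<lambda>u. \<Sum>i<N. gt k W0 i u) holomorphic_on ball 0 \<delta>"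
    by (intro holomorphic_on_sum gt_holo)
  ultimately show ?thesis unfolding phic_def[abs_def] by (intro holomorphic_on_add)
qed

lemma coef_eq:
  assumes j: "j < ee k N"
  shows "fps_expansion (phi k W0) 0 $ j = GF k W0 N $ j"
proof -
  define D where "D = (\<lambda>u. phi k W0 u - phic k W0 N u)"
  have De: "D has_fps_expansion fps_expansion (phi k W0) 0 - GF k W0 N"
    unfolding D_def by (intro has_fps_expansion_diff phi_exp phic_exp)
  define c where "c = (fps_expansion (phi k W0) 0 - GF k W0 N) $ j"
  have c: "c = (deriv ^^ j) D 0 / fact j" unfolding c_def by (rule fps_nth_fps_expansion[OF De])
  have sub: "ball (0::complex) (\<delta>/2) \<subseteq> ball 0 \<delta>" using dpos by auto
  have Dh: "D holomorphic_on ball 0 (\<delta>/2)"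
    unfolding D_def using phi_holo holomorphic_on_subset[OF phic_holo sub]
    by (intro holomorphic_on_diff)
  have "norm c \<le> 0"
  proof (rule small_zero[where \<rho>="\<delta>/2" and m="ee k N - j" and C="2 * exp 1 * exp 1 ^ ee k N"])
    show "0 < \<delta>/2" using dpos by simp
    show "1 \<le> ee k N - j" using j by simp
    show "0 \<le> 2 * exp 1 * exp (1::real) ^ ee k N" by simp
    fix r :: real assume r: "0 < r" "r < \<delta>/2"
    have "norm ((deriv ^^ j) D 0) \<le> fact j * (2 * exp 1 * (exp 1 * r) ^ ee k N) / r ^ j"
    proof (rule Cauchy_inequality)
      show "D holomorphic_on ball 0 r" using r by (intro holomorphic_on_subset[OF Dh]) auto
      have "cball (0::complex) r \<subseteq> ball 0 (\<delta>/2)" using r by (intro subsetI) auto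
      then show "continuous_on (cball 0 r) D"
        using holomorphic_on_imp_continuous_on[OF holomorphic_on_subset[OF Dh]] by blast
      show "0 < r" by fact
      fix x :: complex assume "norm (0 - x) = r"
      then have "norm x = r" by simp
      then show "norm (D x) \<le> 2 * exp 1 * (exp 1 * r) ^ ee k N"
        unfolding D_def using tail_bound r by blast
    qed
    then have "norm c \<le> (2 * exp 1 * (exp 1 * r) ^ ee k N) / r ^ j"
      unfolding c by (simp add: norm_divide field_simps)
    also have "\<dots> = 2 * exp 1 * exp 1 ^ ee k N * r ^ (ee k N - j)"
    proof -
      have "r ^ ee k N = r ^ (ee k N - j) * r ^ j" using j by (simp add: power_add[symmetric])
      then show ?thesis using r by (simp add: power_mult_distrib field_simps)
    qed
    finally show "norm c \<le> 2 * exp 1 * exp 1 ^ ee k N * r ^ (ee k N - j)" .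
  qed
  then have "c = 0" by simp
  then show ?thesis by (simp add: c_def)
qed

lemma coef_rat: "fps_expansion (phi k W0) 0 $ j \<in> \<rat>"
proof -
  have "j < ee k j" using ee_ge[OF k1, of j] by simp
  then have "fps_expansion (phi k W0) 0 $ j = GF k W0 j $ j" by (rule coef_eq)
  then show ?thesis using RF_GF[of j] by (simp add: RF_def)
qed

lemma coef0: "fps_expansion (phi k W0) 0 $ 0 = 0"
proof -
  have "gt k W0 i 0 = 0" for i
  proof -
    have "ee k i \<noteq> 0" using ee_ge[OF k1, of i] by simp
    then show ?thesis by (simp add: gt_def qc_def power_0_left)
  qed
  then have "phi k W0 0 = 0" by (simp add: phi_def wf_at_0 del: wf.simps)
  then show ?thesis using has_fps_expansion_imp_0_eq_fps_nth_0[OF phi_exp] by simp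
qed

end

lemma poly_of_real_rat:
  fixes p :: "rat poly" and u :: real
  shows "poly (map_poly (of_rat :: rat \<Rightarrow> complex) p) (of_real u) = of_real (poly (map_poly of_rat p) u)"
  by (induction p) (simp_all add: map_poly_pCons of_real_of_rat_c[symmetric])

lemma wf_of_real: "wf k W0 N (complex_of_real u) = of_real (wf k W0 N u)"
  by (induction N) (simp_all add: poly_of_real_rat)

lemma of_rat_Wp: "(of_rat (poly (Wp k W0 N) x) :: 'a::real_normed_field) = wf k W0 N (of_rat x)"
  by (induction N) (simp_all add: of_rat_poly_eval of_rat_add of_rat_power poly_monom)

context orbd
begin

lemma real_phic:
  fixes u :: real
  assumes u: "\<bar>u\<bar> < \<delta>"
  shows "wf k W0 N u > 0 \<and> phic k W0 N (of_real u) = of_real (ln (wf k W0 N u) / 2 ^ N)"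
proof (induction N)
  case 0
  have "norm (wf k W0 0 (complex_of_real u) - 1) < 1/4" using dw[of "of_real u"] u by simp
  then have "\<bar>wf k W0 0 u - 1\<bar> < 1/4" unfolding wf_of_real
    by (metis norm_of_real of_real_1 of_real_diff)
  then have p: "wf k W0 0 u > 0" by (simp only: abs_less_iff) linarith
  then show ?case by (simp add: phic_def wf_of_real Ln_of_real del: wf.simps)
next
  case (Suc N)
  define w where "w = wf k W0 N u"
  have w0: "w > 0" and ph: "phic k W0 N (of_real u) = of_real (ln w / 2 ^ N)" using Suc by (auto simp: w_def)
  define r where "r = u ^ ee k N * inverse (w ^ 2)"
  have qr: "qc k W0 N (of_real u) = of_real r" by (simp add: qc_def r_def w_def wf_of_real del: wf.simps)
  have "norm (qc k W0 N (of_real u)) < 1/2" using q_half[of "of_real u" N] u by simp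
  then have r2: "\<bar>r\<bar> < 1/2" using qr by simp
  then have r1: "1 + r > 0" by simp
  have g: "gt k W0 N (of_real u) = of_real (ln (1 + r) / 2 ^ Suc N)"
    by (simp add: gt_def qr Ln_of_real[OF r1, symmetric])
  have ws: "wf k W0 (Suc N) u = w ^ 2 * (1 + r)" using w0 by (simp add: w_def r_def field_simps)
  have pos: "wf k W0 (Suc N) u > 0" unfolding ws using w0 r1 by simp
  have "ln (wf k W0 (Suc N) u) = 2 * ln w + ln (1 + r)" unfolding ws using w0 r1 by (simp add: ln_mult ln_realpow)
  then have re: "ln w / 2 ^ N + ln (1 + r) / 2 ^ Suc N = ln (wf k W0 (Suc N) u) / 2 ^ Suc N"
    by (simp add: field_simps del: wf.simps)
  have ps: "phic k W0 (Suc N) (of_real u) = phic k W0 N (of_real u) + gt k W0 N (of_real u)"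
    by (simp add: phic_def del: wf.simps)
  also have "\<dots> = of_real (ln w / 2 ^ N + ln (1 + r) / 2 ^ Suc N)"
    unfolding ph g by (simp only: of_real_add)
  finally have "phic k W0 (Suc N) (of_real u) = of_real (ln (wf k W0 (Suc N) u) / 2 ^ Suc N)"
    by (simp only: re)
  then show ?case using pos by blast
qed

lemma real_bound:
  fixes u :: real
  assumes u: "\<bar>u\<bar> < \<delta>"
  shows "\<bar>ln (wf k W0 N u) / 2 ^ N\<bar> \<le> 1"
proof -
  have e: "phic k W0 N (of_real u) = of_real (ln (wf k W0 N u) / 2 ^ N)" using real_phic[OF u, of N] by blast
  have "norm (phic k W0 N (of_real u)) \<le> 1" using phic_le1[of "of_real u" N] u by simp
  then have "norm (complex_of_real (ln (wf k W0 N u) / 2 ^ N)) \<le> 1" by (simp only: e)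
  then show ?thesis by (simp only: norm_of_real)
qed

lemma real_lim:
  fixes u :: real
  assumes u: "\<bar>u\<bar> < \<delta>"
  shows "(\<lambda>N. ln (wf k W0 N u) / 2 ^ N) \<longlonglongrightarrow> Re (phi k W0 (of_real u))"
proof -
  have ud: "norm (complex_of_real u) < \<delta>" using u by simp
  have "(\<lambda>N. phic k W0 N (of_real u)) \<longlonglongrightarrow> phi k W0 (of_real u)"
    unfolding phic_def phi_def by (intro tendsto_add tendsto_const summable_LIMSEQ summable_gt[OF ud])
  then have "(\<lambda>N. Re (phic k W0 N (of_real u))) \<longlonglongrightarrow> Re (phi k W0 (of_real u))" by (rule tendsto_Re)
  then show ?thesis using real_phic[OF u] by simp
qed

lemma real_sums:
  fixes u :: real
  assumes u: "\<bar>u\<bar> < \<delta>/2"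
  shows "(\<lambda>n. Re (fps_expansion (phi k W0) 0 $ n) * u ^ n) sums Re (phi k W0 (of_real u))"
proof -
  have h: "phi k W0 holomorphic_on eball 0 (ereal (\<delta>/2))" using phi_holo by simp
  have "(\<lambda>n. fps_expansion (phi k W0) 0 $ n * (of_real u) ^ n) sums phi k W0 (of_real u)"
    by (rule has_fps_expansion_imp_sums_complex[OF phi_exp h]) (use u in simp)
  from sums_Re[OF this] show ?thesis by (simp flip: of_real_power)
qed

end

lemma delta_exists:
  assumes "coeff W0 0 = 1"
  shows "\<exists>\<delta>>0. \<delta> \<le> 1 / (8 * exp 1) \<and> (\<forall>u::complex. norm u < \<delta> \<longrightarrow> norm (wf k W0 0 u - 1) < 1/4)"
proof -
  have c: "continuous (at 0) (\<lambda>u::complex. wf k W0 0 u)" by simp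
  have v: "wf k W0 0 (0::complex) = 1" using assms by (simp add: poly_0_coeff_0 coeff_map_poly)
  obtain d where d: "d > 0" "\<forall>x'. dist x' 0 < d \<longrightarrow> dist (wf k W0 0 x') (wf k W0 0 (0::complex)) < 1/4"
    using c unfolding continuous_at_eps_delta by (metis divide_pos_pos zero_less_numeral zero_less_one)
  define \<delta> where "\<delta> = min d (1 / (8 * exp 1))"
  have "\<delta> > 0" using d by (simp add: \<delta>_def)
  moreover have "\<delta> \<le> 1 / (8 * exp 1)" by (simp add: \<delta>_def)
  moreover have "\<forall>u::complex. norm u < \<delta> \<longrightarrow> norm (wf k W0 0 u - 1) < 1/4"
    using d v by (auto simp: \<delta>_def dist_norm)
  ultimately show ?thesis by blast
qed

lemma analytic_main:
  assumes k: "k \<ge> 1" and W: "coeff W0 0 = 1"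
  shows "\<exists>F::rat fps. \<exists>\<rho>>0. fps_nth F 0 = 0 \<and>
    (\<forall>u::real. \<bar>u\<bar> < \<rho> \<longrightarrow> (\<forall>N. wf k W0 N u > 0 \<and> \<bar>ln (wf k W0 N u) / 2 ^ N\<bar> \<le> 1) \<and>
       summable (\<lambda>n. real_of_rat (fps_nth F n) * u ^ n) \<and>
       (\<lambda>N. ln (wf k W0 N u) / 2 ^ N) \<longlonglongrightarrow> (\<Sum>n. real_of_rat (fps_nth F n) * u ^ n))"
proof -
  obtain \<delta> where d: "\<delta> > 0" "\<delta> \<le> 1 / (8 * exp 1)" "\<forall>u::complex. norm u < \<delta> \<longrightarrow> norm (wf k W0 0 u - 1) < 1/4"
    using delta_exists[OF W, of k] by blast
  interpret orbd k W0 \<delta> using k W d by unfold_locales auto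
  define \<Phi> where "\<Phi> = fps_expansion (phi k W0) 0"
  define F where "F = Abs_fps (\<lambda>n. SOME q::rat. of_rat q = \<Phi> $ n)"
  have Fn: "of_rat (F $ n) = \<Phi> $ n" for n
  proof -
    have "\<Phi> $ n \<in> \<rat>" unfolding \<Phi>_def by (rule coef_rat)
    then obtain q where "\<Phi> $ n = of_rat q" by (auto elim: Rats_cases)
    then have ex: "\<exists>q::rat. of_rat q = \<Phi> $ n" by metis
    show ?thesis unfolding F_def using someI_ex[OF ex] by simp
  qed
  have FR: "real_of_rat (F $ n) = Re (\<Phi> $ n)" for n
    using arg_cong[OF Fn[of n], of Re] by (simp flip: of_real_of_rat_c)
  have F0: "F $ 0 = 0" using Fn[of 0] coef0 by (simp add: \<Phi>_def)
  have main: "\<forall>u::real. \<bar>u\<bar> < \<delta>/2 \<longrightarrow> (\<forall>N. wf k W0 N u > 0 \<and> \<bar>ln (wf k W0 N u) / 2 ^ N\<bar> \<le> 1) \<and>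
       summable (\<lambda>n. real_of_rat (fps_nth F n) * u ^ n) \<and>
       (\<lambda>N. ln (wf k W0 N u) / 2 ^ N) \<longlonglongrightarrow> (\<Sum>n. real_of_rat (fps_nth F n) * u ^ n)"
  proof (intro allI impI)
    fix u :: real assume u: "\<bar>u\<bar> < \<delta>/2"
    then have u': "\<bar>u\<bar> < \<delta>" by simp
    have A: "\<forall>N. 0 < wf k W0 N u \<and> \<bar>ln (wf k W0 N u) / 2 ^ N\<bar> \<le> 1"
      using real_phic[OF u'] real_bound[OF u'] by blast
    have s: "(\<lambda>n. real_of_rat (F $ n) * u ^ n) sums Re (phi k W0 (of_real u))"
      using real_sums[OF u] by (simp add: FR \<Phi>_def)
    then have B: "summable (\<lambda>n. real_of_rat (F $ n) * u ^ n)" by (rule sums_summable)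
    have C: "(\<lambda>N. ln (wf k W0 N u) / 2 ^ N) \<longlonglongrightarrow> (\<Sum>n. real_of_rat (F $ n) * u ^ n)"
      using real_lim[OF u'] s by (simp add: sums_iff)
    show "(\<forall>N. wf k W0 N u > 0 \<and> \<bar>ln (wf k W0 N u) / 2 ^ N\<bar> \<le> 1) \<and>
       summable (\<lambda>n. real_of_rat (fps_nth F n) * u ^ n) \<and>
       (\<lambda>N. ln (wf k W0 N u) / 2 ^ N) \<longlonglongrightarrow> (\<Sum>n. real_of_rat (fps_nth F n) * u ^ n)"
      using A B C by blast
  qed
  have "\<delta>/2 > 0" using d by simp
  then show ?thesis using F0 main by blast
qed


lemma height_step':
  assumes k: "k \<ge> 1" and q: "quotient_of t = (a, b)" and t3: "3 \<le> \<bar>real_of_rat t\<bar>"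
    and z0: "z0 = rat_of_int A0 / rat_of_int b ^ k" "coprime A0 b" "z0 = t ^ k * poly W0 (1 / t)"
    and wpos: "wf k W0 N (1 / real_of_rat t) > 0"
    and wb: "\<bar>ln (wf k W0 N (1 / real_of_rat t)) / 2 ^ N\<bar> \<le> 1"
  shows "weil_height ((f_spec t ^^ N) z0) / 2 ^ N = real k * weil_height t + ln (wf k W0 N (1 / real_of_rat t)) / 2 ^ N"
proof -
  have b: "b > 0" using q by (rule quotient_of_denom_pos)
  have ab: "coprime a b" using q by (rule quotient_of_coprime)
  have tab: "t = rat_of_int a / rat_of_int b" using q by (rule quotient_of_div)
  have t0: "t \<noteq> 0" using t3 by auto
  define m where "m = k * 2 ^ N"
  define w where "w = wf k W0 N (1 / real_of_rat t)"
  define T where "T = real_of_rat t"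
  have T0: "T \<noteq> 0" and T3: "3 \<le> \<bar>T\<bar>" using t3 t0 by (auto simp: T_def)
  obtain A where A: "(f_spec t ^^ N) z0 = rat_of_int A / rat_of_int b ^ m" "coprime A b"
    using orbit_num[OF b ab k z0(1,2), of N] tab by (auto simp: m_def)
  have zpoly: "(f_spec t ^^ N) z0 = t ^ m * poly (Wp k W0 N) (1 / t)"
    using orbit_poly[OF t0 k z0(3)] by (simp add: m_def)
  have zr: "real_of_rat ((f_spec t ^^ N) z0) = T ^ m * w"
    unfolding zpoly w_def T_def by (simp add: of_rat_mult of_rat_power of_rat_Wp of_rat_divide del: wf.simps)
  have hz: "weil_height ((f_spec t ^^ N) z0) = ln (real_of_int (b ^ m)) + ln (max \<bar>real_of_rat ((f_spec t ^^ N) z0)\<bar> 1)"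
    using weil_height_eq[of "b ^ m" A] A b by simp
  have ht: "weil_height t = ln (real_of_int b) + ln (max \<bar>T\<bar> 1)"
    using weil_height_eq[of b a] b ab tab by (simp add: T_def)
  have wp: "w > 0" using wpos by (simp add: w_def)
  have lnabs: "ln (\<bar>T ^ m * w\<bar>) = real m * ln \<bar>T\<bar> + ln w"
    using wp T0 by (simp add: abs_mult power_abs ln_mult ln_realpow)
  have "real m * ln \<bar>T\<bar> + ln w \<ge> 0"
  proof -
    have "ln \<bar>T\<bar> \<ge> ln 3" using T3 by simp
    hence lT: "ln \<bar>T\<bar> \<ge> 1" using ln3 by linarith
    have "ln w \<ge> - (2 ^ N)" using wb by (simp add: w_def abs_le_iff field_simps del: wf.simps)
    moreover have "real m \<ge> 2 ^ N" using k by (simp add: m_def)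
    moreover have "real m * ln \<bar>T\<bar> \<ge> real m" using lT by (simp add: mult_le_cancel_left1)
    ultimately show ?thesis by linarith
  qed
  moreover have pos: "\<bar>T ^ m * w\<bar> > 0" using wp T0 by simp
  ultimately have "\<bar>T ^ m * w\<bar> \<ge> 1" using lnabs ln_ge_zero_iff[OF pos] by simp
  then have hz2: "weil_height ((f_spec t ^^ N) z0) = real m * ln (real_of_int b) + real m * ln \<bar>T\<bar> + ln w"
    using hz zr lnabs b by (simp add: ln_realpow)
  have ht2: "weil_height t = ln (real_of_int b) + ln \<bar>T\<bar>"
    using ht T3 by simp
  show ?thesis
    unfolding hz2 ht2 w_def[symmetric] by (simp add: m_def field_simps)
qed

lemma deg_iter: "degree Q \<ge> 1 \<Longrightarrow> degree ((f_ff ^^ N) Q) = degree Q * 2 ^ N"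
proof (induction N)
  case 0 then show ?case by simp
next
  case (Suc N)
  define R where "R = (f_ff ^^ N) Q"
  have dR: "degree R = degree Q * 2 ^ N" using Suc by (simp add: R_def)
  have R1: "degree R \<ge> 1" using dR Suc.prems by simp
  then have R0: "R \<noteq> 0" by auto
  have "degree (R ^ 2) = 2 * degree R" using R0 by (simp add: degree_power_eq)
  moreover have "degree [:0, 1::rat:] = 1" by simp
  ultimately have "degree (R ^ 2 + [:0, 1:]) = degree (R ^ 2)" using R1 by (intro degree_add_eq_left) simp
  moreover have "(f_ff ^^ Suc N) Q = R ^ 2 + [:0, 1:]" by (simp add: R_def f_ff_def)
  ultimately show ?case using dR \<open>degree (R ^ 2) = 2 * degree R\<close> by (simp add: mult_ac)
qed

lemma canon_ff_pos: "degree Q \<ge> 1 \<Longrightarrow> canon_height_ff Q = real (degree Q)"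
  unfolding canon_height_ff_def pole_sum_poly_def by (simp add: deg_iter limI)

lemma canon_ff_one: "canon_height_ff 1 = 1/2"
proof -
  have "(\<lambda>N. real (pole_sum_poly ((f_ff ^^ (N + 1)) 1)) / 2 ^ (N + 1)) = (\<lambda>N. 1/2)"
  proof
    fix N
    have f1: "f_ff 1 = [:1, 1:]" unfolding f_ff_def power_one by (simp add: one_pCons)
    have "(f_ff ^^ (N + 1)) 1 = (f_ff ^^ N) (f_ff 1)" by (metis Suc_eq_plus1 comp_apply funpow_Suc_right)
    then have "(f_ff ^^ (N + 1)) 1 = (f_ff ^^ N) [:1, 1:]" by (simp only: f1)
    moreover have "degree ((f_ff ^^ N) [:1, 1::rat:]) = 2 ^ N" using deg_iter[of "[:1, 1::rat:]" N] by simp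
    ultimately show "real (pole_sum_poly ((f_ff ^^ (N + 1)) 1)) / 2 ^ (N + 1) = 1/2"
      by (simp add: pole_sum_poly_def)
  qed
  then have "(\<lambda>N. real (pole_sum_poly ((f_ff ^^ (N + 1)) 1)) / 2 ^ (N + 1)) \<longlonglongrightarrow> 1/2" by simp
  then have "(\<lambda>N. real (pole_sum_poly ((f_ff ^^ N) 1)) / 2 ^ N) \<longlonglongrightarrow> 1/2" by (rule LIMSEQ_offset)
  then show ?thesis unfolding canon_height_ff_def by (rule limI)
qed


lemma core:
  fixes X Z :: "rat \<Rightarrow> rat" and k s :: nat and Wz :: "rat poly" and c :: real
  assumes k: "k \<ge> 1" and W: "coeff Wz 0 = 1" and c: "c = real k / 2 ^ s"
   and shift: "\<And>t N. (f_spec t ^^ (N + s)) (X t) = (f_spec t ^^ N) (Z t)"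
   and Zp: "\<And>t. t \<noteq> 0 \<Longrightarrow> Z t = t ^ k * poly Wz (1 / t)"
   and Zn: "\<And>t a b. quotient_of t = (a, b) \<Longrightarrow> \<exists>A0. Z t = rat_of_int A0 / rat_of_int b ^ k \<and> coprime A0 b"
  shows "\<exists>F :: rat fps.
           fps_nth F 0 = 0 \<and>
           (\<exists>r > 0. \<forall>x::real. \<bar>x\<bar> < r \<longrightarrow>
               summable (\<lambda>n. real_of_rat (fps_nth F n) * x ^ n)) \<and>
           (\<exists>T::real. \<forall>t::rat. \<bar>real_of_rat t\<bar> > T \<longrightarrow>
               summable (\<lambda>n. real_of_rat (fps_nth F n) * (1 / real_of_rat t) ^ n) \<and>
               canon_height_spec t (X t) = c * weil_height t + fps_eval_real F (1 / real_of_rat t))"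
proof -
  obtain F \<rho> where F0: "fps_nth F 0 = 0" and \<rho>: "\<rho> > 0" and H: "\<forall>u::real. \<bar>u\<bar> < \<rho> \<longrightarrow> (\<forall>N. wf k Wz N u > 0 \<and> \<bar>ln (wf k Wz N u) / 2 ^ N\<bar> \<le> 1) \<and>
       summable (\<lambda>n. real_of_rat (fps_nth F n) * u ^ n) \<and>
       (\<lambda>N. ln (wf k Wz N u) / 2 ^ N) \<longlonglongrightarrow> (\<Sum>n. real_of_rat (fps_nth F n) * u ^ n)"
    using analytic_main[OF k W] by blast
  define G where "G = Abs_fps (\<lambda>n. fps_nth F n / 2 ^ s)"
  have Gn: "real_of_rat (fps_nth G n) * x ^ n = (real_of_rat (fps_nth F n) * x ^ n) / 2 ^ s" for n x
    by (simp add: G_def of_rat_divide of_rat_power)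
  have G0: "fps_nth G 0 = 0" using F0 by (simp add: G_def)
  have Gs: "summable (\<lambda>n. real_of_rat (fps_nth G n) * x ^ n) \<and>
            fps_eval_real G x = (\<Sum>n. real_of_rat (fps_nth F n) * x ^ n) / 2 ^ s" if x: "\<bar>x\<bar> < \<rho>" for x
  proof -
    have sF: "summable (\<lambda>n. real_of_rat (fps_nth F n) * x ^ n)" using H x by blast
    show ?thesis unfolding Gn fps_eval_real_def using sF by (simp add: summable_divide suminf_divide)
  qed
  show ?thesis
  proof (intro exI[of _ G] conjI G0)
    show "\<exists>r>0. \<forall>x::real. \<bar>x\<bar> < r \<longrightarrow> summable (\<lambda>n. real_of_rat (fps_nth G n) * x ^ n)"
      using \<rho> Gs by blast
    show "\<exists>T::real. \<forall>t::rat. \<bar>real_of_rat t\<bar> > T \<longrightarrow>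
               summable (\<lambda>n. real_of_rat (fps_nth G n) * (1 / real_of_rat t) ^ n) \<and>
               canon_height_spec t (X t) = c * weil_height t + fps_eval_real G (1 / real_of_rat t)"
    proof (intro exI[of _ "max 3 (1 / \<rho>)"] allI impI)
      fix t :: rat assume tT: "\<bar>real_of_rat t\<bar> > max 3 (1 / \<rho>)"
      define u where "u = 1 / real_of_rat t"
      have t3: "3 \<le> \<bar>real_of_rat t\<bar>" using tT by simp
      have t0: "t \<noteq> 0" using t3 by auto
      have u\<rho>: "\<bar>u\<bar> < \<rho>"
      proof -
        have "1 / \<rho> < \<bar>real_of_rat t\<bar>" using tT by simp
        then have h: "1 < \<bar>real_of_rat t\<bar> * \<rho>" using \<rho> by (simp add: field_simps)
        have Ap: "0 < \<bar>real_of_rat t\<bar>" using t3 by linarith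
        have "\<bar>u\<bar> = 1 / \<bar>real_of_rat t\<bar>" by (simp add: u_def abs_divide)
        also have "\<dots> < \<rho>" using pos_divide_less_eq[OF Ap, of 1 \<rho>] h by (simp add: mult.commute)
        finally show ?thesis .
      qed
      obtain a b where q: "quotient_of t = (a, b)" by (cases "quotient_of t") auto
      obtain A0 where A0: "Z t = rat_of_int A0 / rat_of_int b ^ k" "coprime A0 b" using Zn[OF q] by blast
      have Hu: "\<forall>N. wf k Wz N u > 0 \<and> \<bar>ln (wf k Wz N u) / 2 ^ N\<bar> \<le> 1"
        "(\<lambda>N. ln (wf k Wz N u) / 2 ^ N) \<longlonglongrightarrow> (\<Sum>n. real_of_rat (fps_nth F n) * u ^ n)"
        using H u\<rho> by blast+
      have step: "weil_height ((f_spec t ^^ (N + s)) (X t)) / 2 ^ (N + s)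
              = (real k * weil_height t + ln (wf k Wz N u) / 2 ^ N) / 2 ^ s" for N
      proof -
        have "weil_height ((f_spec t ^^ N) (Z t)) / 2 ^ N = real k * weil_height t + ln (wf k Wz N u) / 2 ^ N"
          unfolding u_def by (rule height_step'[OF k q t3 A0 Zp[OF t0]]) (use Hu in \<open>auto simp: u_def\<close>)
        then show ?thesis unfolding shift by (simp add: power_add field_simps)
      qed
      have "(\<lambda>N. weil_height ((f_spec t ^^ (N + s)) (X t)) / 2 ^ (N + s))
              \<longlonglongrightarrow> (real k * weil_height t + (\<Sum>n. real_of_rat (fps_nth F n) * u ^ n)) / 2 ^ s"
        unfolding step by (intro tendsto_divide tendsto_add tendsto_const Hu(2)) auto
      then have "(\<lambda>N. weil_height ((f_spec t ^^ N) (X t)) / 2 ^ N)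
              \<longlonglongrightarrow> (real k * weil_height t + (\<Sum>n. real_of_rat (fps_nth F n) * u ^ n)) / 2 ^ s"
        by (rule LIMSEQ_offset)
      then have "canon_height_spec t (X t) = (real k * weil_height t + (\<Sum>n. real_of_rat (fps_nth F n) * u ^ n)) / 2 ^ s"
        unfolding canon_height_spec_def by (rule limI)
      also have "\<dots> = c * weil_height t + fps_eval_real G u"
        using Gs[OF u\<rho>] c by (simp add: add_divide_distrib)
      finally show "summable (\<lambda>n. real_of_rat (fps_nth G n) * (1 / real_of_rat t) ^ n) \<and>
               canon_height_spec t (X t) = c * weil_height t + fps_eval_real G (1 / real_of_rat t)"
        using Gs[OF u\<rho>] by (simp add: u_def)
    qed
  qed
qed

theorem theorem2:
  fixes P :: "int poly"
  assumes "lead_coeff P = 1"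
  shows "\<exists>F :: rat fps.
           fps_nth F 0 = 0 \<and>
           (\<exists>r > 0. \<forall>x::real. \<bar>x\<bar> < r \<longrightarrow>
               summable (\<lambda>n. real_of_rat (fps_nth F n) * x ^ n)) \<and>
           (\<exists>T::real. \<forall>t::rat. \<bar>real_of_rat t\<bar> > T \<longrightarrow>
               summable (\<lambda>n. real_of_rat (fps_nth F n) * (1 / real_of_rat t) ^ n) \<and>
               canon_height_spec t (poly (map_poly rat_of_int P) t)
                 = canon_height_ff (map_poly rat_of_int P) * weil_height t
                   + fps_eval_real F (1 / real_of_rat t))"
proof -
  define P' where "P' = map_poly rat_of_int P"
  have dP: "degree P' = degree P" unfolding P'_def by (rule degree_map_poly) simp
  have lP: "lead_coeff P' = 1" unfolding P'_def using assms
    by (subst lead_coeff_map_poly_nz) auto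
  show ?thesis
  proof (cases "degree P = 0")
    case True
    have P1: "P' = 1" using degree_0_id[of P'] True dP lP by (simp add: one_pCons)
    show ?thesis unfolding P'_def[symmetric] P1
    proof (rule core[where k = 1 and s = 1 and Wz = "[:1, 1:]" and Z = "\<lambda>t. 1 + t" and X = "poly 1"])
      show "canon_height_ff 1 = real 1 / 2 ^ 1" by (simp add: canon_ff_one)
      show "coeff [:1, 1:] 0 = (1::rat)" by simp
      show "(f_spec t ^^ (N + 1)) (poly 1 t) = (f_spec t ^^ N) (1 + t)" for t N
      proof -
        have "f_spec t 1 = 1 + t" by (simp add: f_spec_def)
        moreover have "(f_spec t ^^ (N + 1)) 1 = (f_spec t ^^ N) (f_spec t 1)"
          by (metis Suc_eq_plus1 comp_apply funpow_Suc_right)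
        ultimately show ?thesis by simp
      qed
      show "1 + t = t ^ 1 * poly [:1, 1:] (1 / t)" if "t \<noteq> 0" for t :: rat
        using that by (simp add: field_simps)
      show "\<exists>A0. 1 + t = rat_of_int A0 / rat_of_int b ^ 1 \<and> coprime A0 b" if q: "quotient_of t = (a, b)" for t a b
      proof (intro exI conjI)
        have b: "b > 0" using q by (rule quotient_of_denom_pos)
        have tab: "t = rat_of_int a / rat_of_int b" using q by (rule quotient_of_div)
        show "1 + t = rat_of_int (a + b) / rat_of_int b ^ 1" using b tab by (simp add: field_simps)
        show "coprime (a + b) b"
          by (rule coprime_cong_int[OF quotient_of_coprime[OF q]]) simp
      qed
    qed simp
  next
    case False
    define d where "d = degree P"
    have d1: "d \<ge> 1" using False by (simp add: d_def)
    show ?thesis unfolding P'_def[symmetric]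
    proof (rule core[where k = d and s = 0 and Wz = "reflect_poly P'" and Z = "poly P'" and X = "poly P'"])
      show "canon_height_ff P' = real d / 2 ^ 0" using d1 dP by (simp add: canon_ff_pos d_def)
      show "coeff (reflect_poly P') 0 = 1" using lP by simp
      show "poly P' t = t ^ d * poly (reflect_poly P') (1 / t)" if "t \<noteq> 0" for t
        using that dP by (simp add: poly_reflect_poly_nz d_def power_one_over field_simps)
      show "\<exists>A0. poly P' t = rat_of_int A0 / rat_of_int b ^ d \<and> coprime A0 b" if q: "quotient_of t = (a, b)" for t a b
      proof -
        have b: "b > 0" using q by (rule quotient_of_denom_pos)
        have ab: "coprime a b" using q by (rule quotient_of_coprime)
        have tab: "t = rat_of_int a / rat_of_int b" using q by (rule quotient_of_div)
        obtain B where B: "poly (map_poly rat_of_int P) (rat_of_int a / rat_of_int b) * rat_of_int b ^ degree P = rat_of_int B"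
          "b dvd (B - lead_coeff P * a ^ degree P)" using poly_hom_num[of b P a] b by auto
        have nz: "rat_of_int b ^ d \<noteq> 0" using b by simp
        have "poly P' t = (poly P' t * rat_of_int b ^ d) / rat_of_int b ^ d" using nz by simp
        also have "poly P' t * rat_of_int b ^ d = rat_of_int B" using B(1) tab by (simp add: P'_def d_def)
        finally have "poly P' t = rat_of_int B / rat_of_int b ^ d" .
        moreover have "coprime B b"
          using coprime_cong_int[of "a ^ d" b B] ab B(2) assms by (simp add: d_def)
        ultimately show ?thesis by blast
      qed
    qed (use d1 in auto)
  qed
qed


end
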